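(* Let $\lambda_v>0$, $r_v>0$, $\rho_v=\lambda_v/r_v$ for $v\in V$, and assume $\sum_{v'\in\bar{\mathcal A}(v)}\rho_{v'}<1$ for all $v\in V$. Under the proportional fair allocation, $N(t)$ is a reversible, positive recurrent Markov process with stationary distribution $$\pi(n)=\frac{1}{c(\rho)}\prod_{v\in V}\rho_v^{n_v}\binom{\sum_{v'\in\bar{\mathcal D}(v)}n_{v'}}{n_v},\qquad n\in\mathbb N^{V},$$ where $$c(\rho)=\prod_{v\in V}\frac{1-\sum_{v'\in\mathcal A(v)}\rho_{v'}}{1-\sum_{v'\in\bar{\mathcal A}(v)}\rho_{v'}}.$$ Moreover, in stationarity, for every $v\in V$, $$\mathbb E[N_v(t)]=\rho_v\sum_{v'\in\bar{\mathcal D}(v)}\frac{1-d(v')}{1-\sum_{v''\in\bar{\mathcal A}(v')}\rho_{v''}},\qquad \psi_v=\frac{\lambda_v}{\mathbb E[N_v(t)]}=r_v\Big[\sum_{v'\in\bar{\mathcal D}(v)}\frac{1-d(v')}{1-\sum_{v''\in\bar{\mathcal A}(v')}\rho_{v''}}\Big]^{-1}.$$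
   Context: $G=(V,E)$ is a finite directed rooted tree with vertex set $V=\{1,\dots,|V|\}$ and root $1$, edges oriented from parent to child. For $v\in V$: $\mathcal A(v)$ is the set of strict ancestors of $v$, $\bar{\mathcal A}(v)=\mathcal A(v)\cup\{v\}$, $\mathcal D(v)$ is the set of strict descendants of $v$, $\bar{\mathcal D}(v)=\mathcal D(v)\cup\{v\}$, and $d(v)$ is the number of children of $v$. $N(t)\in\mathbb N^V$ is the continuous-time Markov chain with transition rates $n\to n+e^v$ at rate $\lambda_v$ and $n\to n-e^v$ at rate $r_v\gamma_v(n)\mathbf 1\{n_v\ge1\}$ ($e^v$ the $v$-th canonical basis vector). The proportional fair allocation is $\gamma_v(n)=\frac{n_v}{\sum_{v'\in\bar{\mathcal D}(v)}n_{v'}}\prod_{a\in\mathcal A(v)}\frac{\sum_{v'\in\mathcal D(a)}n_{v'}}{\sum_{v'\in\bar{\mathcal D}(a)}n_{v'}}$ when $n_v\ge1$ (all denominators are then positive) and $\gamma_v(n)=0$ when $n_v=0$. $\psi_v=\lambda_v/\mathbb E[N_v(t)]$ is the flow throughput of beam $v$. *)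

theory Defs
  imports "HOL-Analysis.Analysis"
begin

text \<open>Vertex set V = {1..m}; the tree is given by its (parent-to-child) edge set E.\<close>

definition is_rooted_tree :: "nat \<Rightarrow> (nat \<times> nat) set \<Rightarrow> bool" where
  "is_rooted_tree m E \<longleftrightarrow> 1 \<le> m \<and> E \<subseteq> {1..m} \<times> {1..m}
     \<and> (\<forall>u. (u, 1) \<notin> E)
     \<and> (\<forall>v\<in>{1..m}. v \<noteq> 1 \<longrightarrow> (\<exists>!u. (u, v) \<in> E))
     \<and> (\<forall>v\<in>{1..m}. (1, v) \<in> E\<^sup>*)"

definition anc :: "(nat \<times> nat) set \<Rightarrow> nat \<Rightarrow> nat set" where
  "anc E v = {a. (a, v) \<in> E\<^sup>+}"

definition ancb :: "(nat \<times> nat) set \<Rightarrow> nat \<Rightarrow> nat set" where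
  "ancb E v = insert v (anc E v)"

definition desc :: "(nat \<times> nat) set \<Rightarrow> nat \<Rightarrow> nat set" where
  "desc E v = {w. (v, w) \<in> E\<^sup>+}"

definition descb :: "(nat \<times> nat) set \<Rightarrow> nat \<Rightarrow> nat set" where
  "descb E v = insert v (desc E v)"

definition nchild :: "(nat \<times> nat) set \<Rightarrow> nat \<Rightarrow> nat" where
  "nchild E v = card {w. (v, w) \<in> E}"

text \<open>State space N^V, as finitely supported functions vanishing outside V.\<close>
definition states :: "nat \<Rightarrow> (nat \<Rightarrow> nat) set" where
  "states m = {n. \<forall>v. v \<notin> {1..m} \<longrightarrow> n v = 0}"

definition pf_alloc :: "(nat \<times> nat) set \<Rightarrow> nat \<Rightarrow> (nat \<Rightarrow> nat) \<Rightarrow> real" where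
  "pf_alloc E v n = (if 1 \<le> n v then
      real (n v) / (\<Sum>u\<in>descb E v. real (n u))
      * (\<Prod>a\<in>anc E v. (\<Sum>u\<in>desc E a. real (n u)) / (\<Sum>u\<in>descb E a. real (n u)))
    else 0)"

text \<open>Transition rate q(n, n') of the CTMC (for n' \<noteq> n).\<close>
definition rate :: "nat \<Rightarrow> (nat \<times> nat) set \<Rightarrow> (nat \<Rightarrow> real) \<Rightarrow> (nat \<Rightarrow> real)
                    \<Rightarrow> (nat \<Rightarrow> nat) \<Rightarrow> (nat \<Rightarrow> nat) \<Rightarrow> real" where
  "rate m E lam r n n' = (\<Sum>v\<in>{1..m}.
      (if n' = n(v := Suc (n v)) then lam v else 0)
    + (if 1 \<le> n v \<and> n' = n(v := n v - 1) then r v * pf_alloc E v n else 0))"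

definition cnorm :: "nat \<Rightarrow> (nat \<times> nat) set \<Rightarrow> (nat \<Rightarrow> real) \<Rightarrow> real" where
  "cnorm m E \<rho> = (\<Prod>v\<in>{1..m}. (1 - (\<Sum>u\<in>anc E v. \<rho> u)) / (1 - (\<Sum>u\<in>ancb E v. \<rho> u)))"

definition pf_stat :: "nat \<Rightarrow> (nat \<times> nat) set \<Rightarrow> (nat \<Rightarrow> real) \<Rightarrow> (nat \<Rightarrow> nat) \<Rightarrow> real" where
  "pf_stat m E \<rho> n = (1 / cnorm m E \<rho>) *
     (\<Prod>v\<in>{1..m}. \<rho> v ^ n v * real ((\<Sum>u\<in>descb E v. n u) choose n v))"

end

theory Submission
  imports Defs
begin

lemma edge_in:
  assumes T: "is_rooted_tree m E" and "(a,b) \<in> E"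
  shows "a \<in> {1..m} \<and> b \<in> {1..m}"
  using assms unfolding is_rooted_tree_def by blast

lemma trancl_in:
  assumes T: "is_rooted_tree m E" and "(a,b) \<in> E\<^sup>+"
  shows "a \<in> {1..m} \<and> b \<in> {1..m}"
  using assms(2) by (induction rule: trancl_induct) (use edge_in[OF T] in blast)+

lemma anc_sub: assumes T: "is_rooted_tree m E" shows "anc E v \<subseteq> {1..m}"
proof
  fix x assume "x \<in> anc E v"
  hence "(x,v) \<in> E\<^sup>+" by (simp add: anc_def)
  thus "x \<in> {1..m}" using trancl_in[OF T] by blast
qed
lemma desc_sub: assumes T: "is_rooted_tree m E" shows "desc E v \<subseteq> {1..m}"
proof
  fix x assume "x \<in> desc E v"
  hence "(v,x) \<in> E\<^sup>+" by (simp add: desc_def)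
  thus "x \<in> {1..m}" using trancl_in[OF T] by blast
qed
lemma fin_anc: "is_rooted_tree m E \<Longrightarrow> finite (anc E v)"
  by (rule finite_subset[OF anc_sub]) auto
lemma fin_desc: "is_rooted_tree m E \<Longrightarrow> finite (desc E v)"
  by (rule finite_subset[OF desc_sub]) auto
lemma fin_descb: "is_rooted_tree m E \<Longrightarrow> finite (descb E v)"
  using fin_desc descb_def by simp
lemma fin_ancb: "is_rooted_tree m E \<Longrightarrow> finite (ancb E v)"
  using fin_anc ancb_def by simp

lemma parent_unique:
  assumes T: "is_rooted_tree m E" and ac: "(a,c) \<in> E" and bc: "(b,c) \<in> E"
  shows "a = b"
proof -
  have c: "c \<in> {1..m}" using edge_in[OF T ac] by blast
  have "c \<noteq> 1" using T ac unfolding is_rooted_tree_def by blast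
  then have "\<exists>!u. (u, c) \<in> E" using T c unfolding is_rooted_tree_def by blast
  thus ?thesis using ac bc by (metis)
qed

lemma acyclic_tree:
  assumes T: "is_rooted_tree m E"
  shows "(v,v) \<notin> E\<^sup>+"
proof
  assume vv: "(v,v) \<in> E\<^sup>+"
  hence "v \<in> {1..m}" using trancl_in[OF T] by blast
  hence "(1,v) \<in> E\<^sup>*" using T unfolding is_rooted_tree_def by blast
  thus False using vv
  proof (induction arbitrary: rule: rtrancl_induct)
    case base
    then show ?case
      by (metis T is_rooted_tree_def tranclE)
  next
    case (step y z)
    from step.prems obtain u where u: "(z,u) \<in> E\<^sup>*" "(u,z) \<in> E"
      by (meson rtranclE tranclD2 trancl_into_rtrancl)
    have "u = y" using parent_unique[OF T u(2) step.hyps(2)] .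
    hence "(y,y) \<in> E\<^sup>+" using u(1) step.hyps(2)
      by (meson rtrancl_into_trancl2)
    thus False using step.IH by blast
  qed
qed

lemma anc_chain:
  assumes T: "is_rooted_tree m E" and "(a,v) \<in> E\<^sup>+" "(b,v) \<in> E\<^sup>+"
  shows "a = b \<or> (a,b) \<in> E\<^sup>+ \<or> (b,a) \<in> E\<^sup>+"
  using assms(2,3)
proof (induction arbitrary: b rule: trancl_induct)
  case (base y)
  from base.prems show ?case
  proof (cases rule: tranclE)
    case base
    then show ?thesis using parent_unique[OF T] \<open>(a,y)\<in>E\<close> by blast
  next
    case (step c)
    then show ?thesis using parent_unique[OF T] \<open>(a,y)\<in>E\<close> by blast
  qed
next
  case (step y z)
  from step.prems show ?case
  proof (cases rule: tranclE)
    case base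
    then show ?thesis using parent_unique[OF T] step.hyps by blast
  next
    case (step c)
    then have "c = y" using parent_unique[OF T] \<open>(y,z)\<in>E\<close> by blast
    then show ?thesis using step.IH step by blast
  qed
qed

lemma desc_children:
  assumes T: "is_rooted_tree m E"
  shows "desc E r = (\<Union>w\<in>descb E r. {c. (w,c) \<in> E})"
proof
  show "desc E r \<subseteq> (\<Union>w\<in>descb E r. {c. (w,c) \<in> E})"
  proof
    fix c assume "c \<in> desc E r"
    hence "(r,c) \<in> E\<^sup>+" by (simp add: desc_def)
    then obtain w where w: "(r,w) \<in> E\<^sup>*" "(w,c) \<in> E" by (meson tranclD2)
    hence "w = r \<or> (r,w) \<in> E\<^sup>+" by (metis rtranclD)
    hence "w \<in> descb E r" unfolding descb_def desc_def by blast
    thus "c \<in> (\<Union>w\<in>descb E r. {c. (w,c) \<in> E})" using w(2) by blast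
  qed
next
  show "(\<Union>w\<in>descb E r. {c. (w,c) \<in> E}) \<subseteq> desc E r"
  proof
    fix c assume "c \<in> (\<Union>w\<in>descb E r. {c. (w,c) \<in> E})"
    then obtain w where w: "w \<in> descb E r" "(w,c) \<in> E" by blast
    hence "w = r \<or> (r,w) \<in> E\<^sup>+" unfolding descb_def desc_def by blast
    hence "(r,c) \<in> E\<^sup>+" using w(2) by (meson r_into_trancl' trancl_into_trancl)
    thus "c \<in> desc E r" by (simp add: desc_def)
  qed
qed

lemma sum_nchild:
  assumes T: "is_rooted_tree m E"
  shows "(\<Sum>w\<in>descb E r. nchild E w) = card (desc E r)"
proof -
  have fin: "finite {c. (w,c) \<in> E}" for w
    by (rule finite_subset[of _ "{1..m}"]) (use edge_in[OF T] in auto)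
  have "card (desc E r) = card (\<Union>w\<in>descb E r. {c. (w,c) \<in> E})"
    using desc_children[OF T] by simp
  also have "\<dots> = (\<Sum>w\<in>descb E r. card {c. (w,c) \<in> E})"
    apply (rule card_UN_disjoint)
    using fin fin_descb[OF T] apply auto[2]
    using parent_unique[OF T] by blast
  finally show ?thesis by (simp add: nchild_def)
qed

lemma sum_one_minus_nchild:
  assumes T: "is_rooted_tree m E"
  shows "(\<Sum>w\<in>descb E r. (1 - real (nchild E w))) = 1"
proof -
  have nr: "r \<notin> desc E r" using acyclic_tree[OF T] by (simp add: desc_def)
  have "(\<Sum>w\<in>descb E r. (1 - real (nchild E w))) = real (card (descb E r)) - real (\<Sum>w\<in>descb E r. nchild E w)"
    by (simp add: sum_subtractf)
  also have "\<dots> = 1"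
    using sum_nchild[OF T, of r] nr fin_desc[OF T, of r] by (simp add: descb_def)
  finally show ?thesis .
qed


definition Rs :: "(nat \<times> nat) set \<Rightarrow> (nat \<Rightarrow> real) \<Rightarrow> nat \<Rightarrow> real" where
  "Rs E \<rho> u = (\<Sum>w\<in>ancb E u. \<rho> w)"
definition fq :: "(nat \<times> nat) set \<Rightarrow> (nat \<Rightarrow> real) \<Rightarrow> nat \<Rightarrow> real" where
  "fq E \<rho> w = (1 - real (nchild E w)) / (1 - Rs E \<rho> w)"
definition mu :: "(nat \<times> nat) set \<Rightarrow> (nat \<Rightarrow> real) \<Rightarrow> nat \<Rightarrow> real" where
  "mu E \<rho> v = \<rho> v * (\<Sum>u\<in>descb E v. fq E \<rho> u)"

lemma descb_iff_ancb: "w \<in> descb E u \<longleftrightarrow> u \<in> ancb E w"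
  by (auto simp: descb_def ancb_def desc_def anc_def)

lemma descb_sub_desc:
  assumes "u \<in> desc E r" shows "descb E u \<subseteq> desc E r"
  using assms by (auto simp: descb_def desc_def)

lemma ancb_split:
  assumes T: "is_rooted_tree m E" and w: "w \<in> desc E r"
  shows "ancb E w = ancb E r \<union> (desc E r \<inter> ancb E w)"
    and "ancb E r \<inter> (desc E r \<inter> ancb E w) = {}"
proof -
  have rw: "(r,w) \<in> E\<^sup>+" using w by (simp add: desc_def)
  show "ancb E w = ancb E r \<union> (desc E r \<inter> ancb E w)"
  proof
    show "ancb E w \<subseteq> ancb E r \<union> (desc E r \<inter> ancb E w)"
    proof
      fix x assume x: "x \<in> ancb E w"
      show "x \<in> ancb E r \<union> (desc E r \<inter> ancb E w)"
      proof (cases "x \<in> desc E r")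
        case True then show ?thesis using x by blast
      next
        case False
        hence "x \<noteq> w" using w by blast
        hence "(x,w) \<in> E\<^sup>+" using x by (simp add: ancb_def anc_def)
        hence "x = r \<or> (x,r) \<in> E\<^sup>+ \<or> (r,x) \<in> E\<^sup>+" using anc_chain[OF T _ rw] by blast
        thus ?thesis using False by (auto simp: ancb_def anc_def desc_def)
      qed
    qed
  next
    have "ancb E r \<subseteq> ancb E w"
      using rw by (auto simp: ancb_def anc_def)
    thus "ancb E r \<union> (desc E r \<inter> ancb E w) \<subseteq> ancb E w" by blast
  qed
  show "ancb E r \<inter> (desc E r \<inter> ancb E w) = {}"
  proof -
    have "x \<notin> desc E r" if "x \<in> ancb E r" for x
    proof
      assume "x \<in> desc E r"
      hence "(r,x) \<in> E\<^sup>+" by (simp add: desc_def)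
      moreover have "x = r \<or> (x,r) \<in> E\<^sup>+" using that by (simp add: ancb_def anc_def)
      ultimately have "(r,r) \<in> E\<^sup>+" by auto
      thus False using acyclic_tree[OF T] by blast
    qed
    thus ?thesis by blast
  qed
qed

lemma Rs_split:
  assumes T: "is_rooted_tree m E" and w: "w \<in> desc E r"
  shows "Rs E \<rho> w = Rs E \<rho> r + (\<Sum>u\<in>desc E r \<inter> ancb E w. \<rho> u)"
proof -
  have "Rs E \<rho> w = (\<Sum>u\<in>ancb E r \<union> (desc E r \<inter> ancb E w). \<rho> u)"
    unfolding Rs_def using ancb_split(1)[OF T w] by simp
  also have "\<dots> = Rs E \<rho> r + (\<Sum>u\<in>desc E r \<inter> ancb E w. \<rho> u)"
    unfolding Rs_def
    by (rule sum.union_disjoint) (use fin_ancb[OF T] fin_desc[OF T] ancb_split(2)[OF T w] in auto)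
  finally show ?thesis .
qed

lemma mu_rec:
  assumes T: "is_rooted_tree m E" and load: "\<forall>u\<in>{1..m}. Rs E \<rho> u < 1"
    and r: "r \<in> {1..m}"
  shows "mu E \<rho> r * (1 - Rs E \<rho> r) = \<rho> r * (1 + (\<Sum>u\<in>desc E r. mu E \<rho> u))"
proof -
  let ?f = "fq E \<rho>" and ?R = "Rs E \<rho>" and ?d = "\<lambda>w. real (nchild E w)"
  have finD: "finite (desc E r)" using fin_desc[OF T] .
  have nr: "r \<notin> desc E r" using acyclic_tree[OF T] by (simp add: desc_def)
  have Rlt: "?R w < 1" if "w \<in> descb E r" for w
  proof -
    have "w \<in> {1..m}" using that r desc_sub[OF T, of r] by (auto simp: descb_def)
    thus ?thesis using load by blast
  qed
  have "(\<Sum>u\<in>desc E r. mu E \<rho> u) = (\<Sum>u\<in>desc E r. \<Sum>w\<in>{w\<in>desc E r. w \<in> descb E u}. \<rho> u * ?f w)"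
  proof (rule sum.cong[OF refl])
    fix u assume u: "u \<in> desc E r"
    have "{w\<in>desc E r. w \<in> descb E u} = descb E u" using descb_sub_desc[OF u] by blast
    thus "mu E \<rho> u = (\<Sum>w\<in>{w\<in>desc E r. w \<in> descb E u}. \<rho> u * ?f w)"
      by (simp add: mu_def sum_distrib_left)
  qed
  also have "\<dots> = (\<Sum>w\<in>desc E r. \<Sum>u\<in>{u\<in>desc E r. w \<in> descb E u}. \<rho> u * ?f w)"
    by (rule sum.swap_restrict[OF finD finD])
  also have "\<dots> = (\<Sum>w\<in>desc E r. ?f w * (?R w - ?R r))"
  proof (rule sum.cong[OF refl])
    fix w assume w: "w \<in> desc E r"
    have "{u\<in>desc E r. w \<in> descb E u} = desc E r \<inter> ancb E w" using descb_iff_ancb by blast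
    thus "(\<Sum>u\<in>{u\<in>desc E r. w \<in> descb E u}. \<rho> u * ?f w) = ?f w * (?R w - ?R r)"
      using Rs_split[OF T w, of \<rho>] by (simp add: sum_distrib_right[symmetric] mult.commute)
  qed
  also have "\<dots> = (\<Sum>w\<in>desc E r. (1 - Rs E \<rho> r) * ?f w - (1 - ?d w))"
  proof (rule sum.cong[OF refl])
    fix w assume w: "w \<in> desc E r"
    have "?R w < 1" using Rlt w by (simp add: descb_def)
    thus "?f w * (?R w - ?R r) = (1 - Rs E \<rho> r) * ?f w - (1 - ?d w)"
      by (simp add: fq_def field_simps)
  qed
  also have "\<dots> = (1 - ?R r) * (\<Sum>w\<in>desc E r. ?f w) - (\<Sum>w\<in>desc E r. (1 - ?d w))"
    by (simp add: sum_subtractf sum_distrib_left)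
  also have "(\<Sum>w\<in>desc E r. (1 - ?d w)) = ?d r"
    using sum_one_minus_nchild[OF T, of r] nr finD by (simp add: descb_def)
  finally have S: "(\<Sum>u\<in>desc E r. mu E \<rho> u) = (1 - ?R r) * (\<Sum>w\<in>desc E r. ?f w) - ?d r" .
  have fr: "(1 - ?R r) * ?f r = 1 - ?d r" using Rlt[of r] by (simp add: descb_def fq_def)
  have M: "mu E \<rho> r = \<rho> r * (?f r + (\<Sum>w\<in>desc E r. ?f w))"
    using nr finD by (simp add: mu_def descb_def)
  have S2: "(1 - ?R r) * (\<Sum>w\<in>desc E r. ?f w) = (\<Sum>u\<in>desc E r. mu E \<rho> u) + ?d r"
    using S by simp
  have "mu E \<rho> r * (1 - ?R r) = \<rho> r * ((1 - ?R r) * ?f r + (1 - ?R r) * (\<Sum>w\<in>desc E r. ?f w))"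
    unfolding M by (simp add: algebra_simps)
  also have "\<dots> = \<rho> r * ((1 - ?d r) + ((\<Sum>u\<in>desc E r. mu E \<rho> u) + ?d r))"
    unfolding fr S2 ..
  also have "\<dots> = \<rho> r * (1 + (\<Sum>u\<in>desc E r. mu E \<rho> u))" by simp
  finally show ?thesis .
qed


lemma negbin_sums:
  fixes x :: real assumes "0 \<le> x" "x < 1"
  shows "(\<lambda>k. x^k * real ((k + T) choose k)) sums (1 / (1 - x) ^ (T + 1))"
proof -
  have "\<bar>-x\<bar> < 1" using assms by simp
  from gen_binomial_real[OF this, of "- real (T+1)"]
  have "(\<lambda>k. (- real (T+1) gchoose k) * (-x)^k) sums (1 + - x) powr (- real (T+1))" .
  moreover have "(- real (T+1) gchoose k) * (-x)^k = x^k * real ((k + T) choose k)" for k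
  proof -
    have "(- real (T+1) gchoose k) = (-1)^k * ((real k + real T) gchoose k)"
      by (subst gbinomial_negated_upper) (simp add: algebra_simps)
    also have "(real k + real T) gchoose k = real ((k+T) choose k)"
      by (simp add: binomial_gbinomial)
    finally show ?thesis by (simp add: power_minus_mult mult_ac power_mult_distrib[symmetric] flip: power_mult_distrib)
  qed
  moreover have "(1 + - x) powr (- real (T+1)) = 1 / (1 - x) ^ (T + 1)"
  proof -
    have "(1 + - x) powr (- real (T+1)) = (1 - x) powr (- real (T+1))" by simp
    also have "\<dots> = inverse ((1 - x) powr real (T+1))"
      by (rule powr_minus)
    also have "(1 - x) powr real (T+1) = (1 - x) ^ (T+1)"
      using assms powr_realpow[of "1-x" "T+1"] by (simp only: of_nat_add)
    finally show ?thesis by (simp only: divide_inverse mult_1)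
  qed
  ultimately show ?thesis by simp
qed

lemma negbin_mean_sums:
  fixes x :: real assumes "0 \<le> x" "x < 1"
  shows "(\<lambda>k. real k * (x^k * real ((k + T) choose k))) sums (x * real (T+1) / (1 - x) ^ (T + 2))"
proof -
  have "(\<lambda>j. x^j * real ((j + (T+1)) choose j)) sums (1 / (1 - x) ^ (T + 2))"
    using negbin_sums[OF assms, of "T+1"] by simp
  hence S: "(\<lambda>j. (x * real (T+1)) * (x^j * real ((j + (T+1)) choose j))) sums ((x * real (T+1)) * (1 / (1 - x) ^ (T + 2)))"
    by (rule sums_mult)
  have EQ: "(x * real (T+1)) * (x^j * real ((j + (T+1)) choose j)) = real (Suc j) * (x^Suc j * real ((Suc j + T) choose Suc j))" for j
  proof -
    have "Suc j * ((Suc j + T) choose Suc j) = (T+1) * ((j + (T+1)) choose j)"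
      using Suc_times_binomial_add by simp
    hence "real (Suc j) * real ((Suc j + T) choose Suc j) = real (T+1) * real ((j + (T+1)) choose j)"
      by (metis of_nat_mult)
    moreover have "\<And>s c t c' :: real. s * c = t * c' \<Longrightarrow> (x * t) * (x^j * c') = s * (x^Suc j * c)"
      by (simp add: algebra_simps)
    ultimately show ?thesis by blast
  qed
  have F: "(\<lambda>j. (x * real (T+1)) * (x^j * real ((j + (T+1)) choose j))) = (\<lambda>j. real (Suc j) * (x^Suc j * real ((Suc j + T) choose Suc j)))"
    by (rule ext) (rule EQ)
  have V: "(x * real (T+1)) * (1 / (1 - x) ^ (T + 2)) = x * real (T+1) / (1 - x) ^ (T + 2)" by simp
  from S have "(\<lambda>j. real (Suc j) * (x^Suc j * real ((Suc j + T) choose Suc j))) sums (x * real (T+1) / (1 - x) ^ (T + 2))"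
    unfolding F V .
  thus ?thesis by (rule sums_Suc_imp[rotated]) simp
qed

lemma nonneg_sums_has_sum:
  fixes f :: "nat \<Rightarrow> real"
  assumes "\<And>k. f k \<ge> 0" "f sums s"
  shows "(f has_sum s) UNIV"
proof (rule norm_summable_imp_has_sum)
  have "summable f" using assms(2) by (rule sums_summable)
  moreover have "(\<lambda>k. norm (f k)) = f" using assms(1) by (intro ext) simp
  ultimately show "summable (\<lambda>k. norm (f k))" by simp
qed (rule assms(2))

lemma has_sum_finsum:
  fixes f :: "'i \<Rightarrow> 'a \<Rightarrow> real"
  assumes "finite I" "\<And>i. i \<in> I \<Longrightarrow> (f i has_sum s i) A"
  shows "((\<lambda>x. \<Sum>i\<in>I. f i x) has_sum (\<Sum>i\<in>I. s i)) A"
  using assms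
proof (induction I rule: finite_induct)
  case empty
  then show ?case by simp
next
  case (insert i I)
  have "((\<lambda>x. f i x + (\<Sum>i\<in>I. f i x)) has_sum (s i + (\<Sum>i\<in>I. s i))) A"
    by (rule has_sum_add) (use insert in auto)
  thus ?case using insert by simp
qed

definition stV :: "nat set \<Rightarrow> (nat \<Rightarrow> nat) set" where
  "stV V = {n. \<forall>v. v \<notin> V \<longrightarrow> n v = 0}"

lemma stV_empty: "stV {} = {\<lambda>_. 0}"
  by (auto simp: stV_def)

lemma has_sum_split_coord:
  fixes f :: "(nat \<Rightarrow> nat) \<Rightarrow> real"
  assumes r: "r \<notin> V"
    and nn: "\<And>n. n \<in> stV (insert r V) \<Longrightarrow> f n \<ge> 0"
    and each: "\<And>n. n \<in> stV V \<Longrightarrow> ((\<lambda>k. f (n(r:=k))) has_sum g n) UNIV"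
    and g: "(g has_sum s) (stV V)"
  shows "(f has_sum s) (stV (insert r V))"
proof -
  let ?h = "\<lambda>p. f ((fst p)(r := snd p))"
  have each': "\<And>n. n \<in> stV V \<Longrightarrow> ((\<lambda>k. ?h (n, k)) has_sum g n) UNIV" using each by simp
  have nn': "\<And>n k. n \<in> stV V \<Longrightarrow> k \<in> UNIV \<Longrightarrow> ?h (n, k) \<ge> 0"
    using nn by (auto simp: stV_def)
  have sm: "?h summable_on Sigma (stV V) (\<lambda>_. UNIV)"
    by (rule summable_on_SigmaI[OF each' has_sum_imp_summable[OF g] nn'])
  have H: "(?h has_sum s) (Sigma (stV V) (\<lambda>_. UNIV))"
    by (rule has_sum_SigmaI[OF each' g sm])
  have bij: "bij_betw (\<lambda>p. (fst p)(r := snd p)) (Sigma (stV V) (\<lambda>_. UNIV)) (stV (insert r V))"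
  proof (rule bij_betwI[where g = "\<lambda>n. (n(r:=0), n r)"])
    show "(\<lambda>p. (fst p)(r := snd p)) \<in> Sigma (stV V) (\<lambda>_. UNIV) \<rightarrow> stV (insert r V)"
      by (auto simp: stV_def)
    show "(\<lambda>n. (n(r:=0), n r)) \<in> stV (insert r V) \<rightarrow> Sigma (stV V) (\<lambda>_. UNIV)"
      by (auto simp: stV_def)
    show "(\<lambda>n. (n(r:=0), n r)) ((fst p)(r := snd p)) = p" if "p \<in> Sigma (stV V) (\<lambda>_. UNIV)" for p
      using that r by (cases p) (auto simp: stV_def fun_eq_iff)
    show "(fst ((\<lambda>n. (n(r:=0), n r)) n))(r := snd ((\<lambda>n. (n(r:=0), n r)) n)) = n" for n
      by auto
  qed
  show ?thesis using H has_sum_reindex_bij_betw[OF bij, of f s] by simp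
qed


definition Ss :: "(nat \<times> nat) set \<Rightarrow> (nat \<Rightarrow> nat) \<Rightarrow> nat \<Rightarrow> nat" where
  "Ss E n v = (\<Sum>u\<in>descb E v. n u)"
definition alph :: "(nat \<times> nat) set \<Rightarrow> (nat \<Rightarrow> real) \<Rightarrow> nat set \<Rightarrow> nat \<Rightarrow> real" where
  "alph E \<rho> V v = 1 - (\<Sum>u\<in>anc E v - V. \<rho> u)"
definition wt :: "(nat \<times> nat) set \<Rightarrow> (nat \<Rightarrow> real) \<Rightarrow> nat set \<Rightarrow> (nat \<Rightarrow> nat) \<Rightarrow> real" where
  "wt E \<rho> V n = (\<Prod>v\<in>V. (\<rho> v / alph E \<rho> V v) ^ (n v) * real (Ss E n v choose n v))"
definition Cf :: "(nat \<times> nat) set \<Rightarrow> (nat \<Rightarrow> real) \<Rightarrow> nat \<Rightarrow> real" where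
  "Cf E \<rho> v = (1 - (\<Sum>u\<in>anc E v. \<rho> u)) / (1 - Rs E \<rho> v)"

lemma not_anc_self: "is_rooted_tree m E \<Longrightarrow> v \<notin> anc E v"
  using acyclic_tree by (simp add: anc_def)
lemma not_desc_self: "is_rooted_tree m E \<Longrightarrow> v \<notin> desc E v"
  using acyclic_tree by (simp add: desc_def)

lemma Rs_eq:
  assumes T: "is_rooted_tree m E"
  shows "Rs E \<rho> v = \<rho> v + (\<Sum>u\<in>anc E v. \<rho> u)"
  unfolding Rs_def ancb_def using fin_anc[OF T] not_anc_self[OF T] by simp

lemma anc_lt1:
  assumes T: "is_rooted_tree m E" and rho0: "\<forall>v\<in>{1..m}. 0 \<le> \<rho> v"
    and load: "\<forall>v\<in>{1..m}. Rs E \<rho> v < 1"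
  shows "(\<Sum>u\<in>anc E v. \<rho> u) < 1"
proof (cases "v \<in> {1..m}")
  case True
  then show ?thesis using Rs_eq[OF T, of \<rho> v] rho0 load by force
next
  case False
  hence "anc E v = {}" using trancl_in[OF T] by (auto simp: anc_def)
  then show ?thesis by simp
qed

lemma alph_pos:
  assumes T: "is_rooted_tree m E" and rho0: "\<forall>v\<in>{1..m}. 0 \<le> \<rho> v"
    and load: "\<forall>v\<in>{1..m}. Rs E \<rho> v < 1"
  shows "alph E \<rho> V v > 0"
proof -
  have "(\<Sum>u\<in>anc E v - V. \<rho> u) \<le> (\<Sum>u\<in>anc E v. \<rho> u)"
    by (rule sum_mono2) (use fin_anc[OF T] anc_sub[OF T] rho0 in auto)
  thus ?thesis using anc_lt1[OF assms, of v] by (simp add: alph_def)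
qed

lemma exists_root:
  assumes T: "is_rooted_tree m E" and fin: "finite V" and ne: "V \<noteq> {}"
  shows "\<exists>r\<in>V. anc E r \<inter> V = {}"
proof -
  let ?M = "Max ((\<lambda>x. card (desc E x)) ` V)"
  have "?M \<in> (\<lambda>x. card (desc E x)) ` V" using fin ne by simp
  then obtain r where r: "r \<in> V" "card (desc E r) = ?M" by auto
  have "anc E r \<inter> V = {}"
  proof (rule ccontr)
    assume "anc E r \<inter> V \<noteq> {}"
    then obtain a where a: "a \<in> anc E r" "a \<in> V" by blast
    have "desc E r \<subset> desc E a"
    proof
      show "desc E r \<subseteq> desc E a" using a(1) by (auto simp: anc_def desc_def)
      have "r \<in> desc E a" using a(1) by (simp add: anc_def desc_def)
      thus "desc E r \<noteq> desc E a" using not_desc_self[OF T] by blast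
    qed
    hence "card (desc E r) < card (desc E a)" by (rule psubset_card_mono[OF fin_desc[OF T]])
    moreover have "card (desc E a) \<le> ?M" using fin a(2) by simp
    ultimately show False using r by simp
  qed
  thus ?thesis using r by blast
qed

lemma anc_minus_desc:
  assumes T: "is_rooted_tree m E" and down: "\<forall>v\<in>V. desc E v \<subseteq> V"
    and r: "r \<in> V" "anc E r \<inter> V = {}" and v: "v \<in> desc E r"
  shows "anc E v - V = anc E r"
proof
  have rv: "(r,v) \<in> E\<^sup>+" using v by (simp add: desc_def)
  show "anc E v - V \<subseteq> anc E r"
  proof
    fix x assume x: "x \<in> anc E v - V"
    hence xv: "(x,v) \<in> E\<^sup>+" by (simp add: anc_def)
    have "x = r \<or> (x,r) \<in> E\<^sup>+ \<or> (r,x) \<in> E\<^sup>+" using anc_chain[OF T xv rv] .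
    moreover have "x \<noteq> r" using x r by blast
    moreover have "(r,x) \<notin> E\<^sup>+" using x down r(1) by (auto simp: desc_def)
    ultimately show "x \<in> anc E r" by (simp add: anc_def)
  qed
  show "anc E r \<subseteq> anc E v - V"
    using r(2) rv by (auto simp: anc_def)
qed

lemma alph_remove:
  assumes T: "is_rooted_tree m E" and r: "r \<in> V"
  shows "alph E \<rho> (V - {r}) v = alph E \<rho> V v - (if r \<in> anc E v then \<rho> r else 0)"
proof -
  have fin: "finite (anc E v - V)" using fin_anc[OF T] by simp
  show ?thesis
  proof (cases "r \<in> anc E v")
    case True
    hence "anc E v - (V - {r}) = insert r (anc E v - V)" using r by blast
    thus ?thesis using True fin r by (simp add: alph_def)
  next
    case False
    hence "anc E v - (V - {r}) = anc E v - V" by blast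
    thus ?thesis using False by (simp add: alph_def)
  qed
qed

lemma wt_factor:
  assumes T: "is_rooted_tree m E" and rho0: "\<forall>v\<in>{1..m}. 0 \<le> \<rho> v"
    and load: "\<forall>v\<in>{1..m}. Rs E \<rho> v < 1"
    and finV: "finite V" and down: "\<forall>v\<in>V. desc E v \<subseteq> V"
    and r: "r \<in> V" "anc E r \<inter> V = {}"
  shows "wt E \<rho> V (n(r:=k)) = (\<rho> r / alph E \<rho> V r)^k * real ((k + (\<Sum>u\<in>desc E r. n u)) choose k)
           * ((1 - \<rho> r / alph E \<rho> V r)^(\<Sum>u\<in>desc E r. n u) * wt E \<rho> (V - {r}) n)"
proof -
  define V' where "V' = V - {r}"
  define a where "a = alph E \<rho> V r"
  define x where "x = \<rho> r / a"
  have VV: "V = insert r V'" "r \<notin> V'" "finite V'" using r finV by (auto simp: V'_def)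
  have nrd: "r \<notin> desc E r" using not_desc_self[OF T] .
  have a_eq: "a = 1 - (\<Sum>u\<in>anc E r. \<rho> u)"
  proof -
    have "anc E r - V = anc E r" using r(2) by blast
    thus ?thesis by (simp add: a_def alph_def)
  qed
  have a_pos: "a > 0" using alph_pos[OF T rho0 load] by (simp add: a_def)
  have Ssr: "Ss E (n(r:=k)) r = k + (\<Sum>u\<in>desc E r. n u)"
  proof -
    have "Ss E (n(r:=k)) r = k + (\<Sum>u\<in>desc E r. (n(r:=k)) u)"
      unfolding Ss_def descb_def using nrd fin_desc[OF T] by simp
    also have "(\<Sum>u\<in>desc E r. (n(r:=k)) u) = (\<Sum>u\<in>desc E r. n u)"
      by (rule sum.cong) (use nrd in auto)
    finally show ?thesis .
  qed
  have r_notin_descb: "r \<notin> descb E v" if "v \<in> V'" for v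
  proof
    assume "r \<in> descb E v"
    moreover have "v \<noteq> r" using that VV by blast
    ultimately have "v \<in> anc E r" by (auto simp: descb_def desc_def anc_def)
    thus False using r(2) that VV by blast
  qed
  have Ssv: "Ss E (n(r:=k)) v = Ss E n v" if "v \<in> V'" for v
    unfolding Ss_def by (rule sum.cong) (use r_notin_descb[OF that] in auto)
  have fac: "(\<rho> v / alph E \<rho> V v)^(n v) = (\<rho> v / alph E \<rho> V' v)^(n v) * (if v \<in> desc E r then (1 - x)^(n v) else 1)"
    if v: "v \<in> V'" for v
  proof (cases "v \<in> desc E r")
    case True
    have "anc E v - V = anc E r" by (rule anc_minus_desc[OF T down r True])
    hence av: "alph E \<rho> V v = a" by (simp add: alph_def a_eq)
    have "r \<in> anc E v" using True by (simp add: anc_def desc_def)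
    hence av': "alph E \<rho> V' v = a - \<rho> r" using alph_remove[OF T r(1), of \<rho> v] av by (simp add: V'_def)
    have eqn: "\<rho> v / a = \<rho> v / (a - \<rho> r) * (1 - x)"
    proof -
      have "a - \<rho> r > 0" using alph_pos[OF T rho0 load, of V' v] av' by simp
      thus ?thesis using a_pos by (simp add: x_def field_simps)
    qed
    show ?thesis unfolding av av' eqn if_P[OF True] by (rule power_mult_distrib)
  next
    case False
    hence "r \<notin> anc E v" by (simp add: anc_def desc_def)
    hence "alph E \<rho> V' v = alph E \<rho> V v" using alph_remove[OF T r(1), of \<rho> v] by (simp add: V'_def)
    then show ?thesis using False by simp
  qed
  have "wt E \<rho> V (n(r:=k)) = (\<rho> r / a)^k * real (Ss E (n(r:=k)) r choose k)
      * (\<Prod>v\<in>V'. (\<rho> v / alph E \<rho> V v) ^ (n v) * real (Ss E (n(r:=k)) v choose n v))"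
  proof -
    have "wt E \<rho> V (n(r:=k)) = (\<rho> r / alph E \<rho> V r) ^ ((n(r:=k)) r) * real (Ss E (n(r:=k)) r choose (n(r:=k)) r)
       * (\<Prod>v\<in>V - {r}. (\<rho> v / alph E \<rho> V v) ^ ((n(r:=k)) v) * real (Ss E (n(r:=k)) v choose (n(r:=k)) v))"
      unfolding wt_def by (rule prod.remove[OF finV r(1)])
    also have "(\<Prod>v\<in>V - {r}. (\<rho> v / alph E \<rho> V v) ^ ((n(r:=k)) v) * real (Ss E (n(r:=k)) v choose (n(r:=k)) v))
        = (\<Prod>v\<in>V'. (\<rho> v / alph E \<rho> V v) ^ (n v) * real (Ss E (n(r:=k)) v choose n v))"
      unfolding V'_def by (rule prod.cong) auto
    finally show ?thesis by (simp only: fun_upd_same a_def)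
  qed
  also have "(\<Prod>v\<in>V'. (\<rho> v / alph E \<rho> V v) ^ (n v) * real (Ss E (n(r:=k)) v choose n v))
      = (\<Prod>v\<in>V'. ((\<rho> v / alph E \<rho> V' v)^(n v) * real (Ss E n v choose n v)) * (if v \<in> desc E r then (1 - x)^(n v) else 1))"
    by (rule prod.cong[OF refl]) (simp add: fac Ssv)
  also have "\<dots> = wt E \<rho> V' n * (\<Prod>v\<in>V'. (if v \<in> desc E r then (1 - x)^(n v) else 1))"
    by (simp add: prod.distrib wt_def)
  also have "(\<Prod>v\<in>V'. (if v \<in> desc E r then (1 - x)^(n v) else 1)) = (\<Prod>v\<in>{v\<in>V'. v \<in> desc E r}. (1 - x)^(n v))"
    by (rule prod.inter_filter[symmetric]) (use VV in auto)
  also have "{v\<in>V'. v \<in> desc E r} = desc E r" using down r(1) nrd by (auto simp: V'_def)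
  also have "(\<Prod>v\<in>desc E r. (1 - x)^(n v)) = (1 - x)^(\<Sum>u\<in>desc E r. n u)"
    by (rule power_sum[symmetric])
  finally show ?thesis unfolding x_def a_def V'_def by (simp only: Ssr ac_simps)
qed


lemma wt_nonneg:
  assumes T: "is_rooted_tree m E" and rho0: "\<forall>v\<in>{1..m}. 0 \<le> \<rho> v"
    and load: "\<forall>v\<in>{1..m}. Rs E \<rho> v < 1" and V: "V \<subseteq> {1..m}"
  shows "wt E \<rho> V n \<ge> 0"
  unfolding wt_def
proof (rule prod_nonneg)
  fix v assume "v \<in> V"
  hence "\<rho> v \<ge> 0" using V rho0 by blast
  moreover have "alph E \<rho> V v > 0" by (rule alph_pos[OF T rho0 load])
  ultimately show "0 \<le> (\<rho> v / alph E \<rho> V v) ^ n v * real (Ss E n v choose n v)" by simp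
qed

lemma core:
  assumes T: "is_rooted_tree m E" and rho0: "\<forall>v\<in>{1..m}. 0 \<le> \<rho> v"
    and load: "\<forall>v\<in>{1..m}. Rs E \<rho> v < 1"
    and finV: "finite V" and Vsub: "V \<subseteq> {1..m}" and down: "\<forall>v\<in>V. desc E v \<subseteq> V"
  shows "(wt E \<rho> V has_sum (\<Prod>v\<in>V. Cf E \<rho> v)) (stV V) \<and>
    (\<forall>v\<in>V. ((\<lambda>n. real (n v) * wt E \<rho> V n) has_sum ((\<Prod>v\<in>V. Cf E \<rho> v) * mu E \<rho> v)) (stV V))"
  using finV Vsub down
proof (induction V rule: finite_psubset_induct)
  case (psubset V)
  show ?case
  proof (cases "V = {}")
    case True
    show ?thesis using True by (simp add: stV_empty wt_def) (rule has_sum_finiteI, auto)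
  next
    case False
    obtain r where r: "r \<in> V" "anc E r \<inter> V = {}" using exists_root[OF T psubset.hyps(1) False] by blast
    define V' where "V' = V - {r}"
    have VV: "V = insert r V'" "r \<notin> V'" "finite V'" using r psubset.hyps(1) by (auto simp: V'_def)
    have nrd: "r \<notin> desc E r" using not_desc_self[OF T] .
    have V'sub: "V' \<subseteq> {1..m}" using psubset.prems(1) by (auto simp: V'_def)
    have V'down: "\<forall>v\<in>V'. desc E v \<subseteq> V'"
    proof
      fix v assume v: "v \<in> V'"
      have "r \<notin> desc E v"
      proof
        assume "r \<in> desc E v"
        hence "v \<in> anc E r" by (simp add: anc_def desc_def)
        thus False using r v by (auto simp: V'_def)
      qed
      thus "desc E v \<subseteq> V'" using psubset.prems(2) v by (auto simp: V'_def)
    qed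
    have descr: "desc E r \<subseteq> V'" using psubset.prems(2) r(1) nrd by (auto simp: V'_def)
    have IH: "(wt E \<rho> V' has_sum (\<Prod>v\<in>V'. Cf E \<rho> v)) (stV V') \<and>
      (\<forall>v\<in>V'. ((\<lambda>n. real (n v) * wt E \<rho> V' n) has_sum ((\<Prod>v\<in>V'. Cf E \<rho> v) * mu E \<rho> v)) (stV V'))"
      by (rule psubset.IH) (use V'sub V'down r in \<open>auto simp: V'_def\<close>)
    define C' where "C' = (\<Prod>v\<in>V'. Cf E \<rho> v)"
    have CV: "(\<Prod>v\<in>V. Cf E \<rho> v) = Cf E \<rho> r * C'" using VV by (simp add: C'_def)
    define a where "a = alph E \<rho> V r"
    define x where "x = \<rho> r / a"
    have a_eq: "a = 1 - (\<Sum>u\<in>anc E r. \<rho> u)"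
    proof -
      have "anc E r - V = anc E r" using r(2) by blast
      thus ?thesis by (simp add: a_def alph_def)
    qed
    have rm: "r \<in> {1..m}" using r psubset.prems by blast
    have ar: "a - \<rho> r = 1 - Rs E \<rho> r" using Rs_eq[OF T, of \<rho> r] a_eq by simp
    have ar_pos: "a - \<rho> r > 0" using ar load rm by simp
    have rr0: "\<rho> r \<ge> 0" using rho0 rm by blast
    have a_pos: "a > 0" using ar_pos rr0 by simp
    have x0: "0 \<le> x" using rr0 a_pos by (simp add: x_def)
    have x1: "x < 1" using ar_pos a_pos by (simp add: x_def)
    have omx: "1 - x = (1 - Rs E \<rho> r) / a" using a_pos ar by (simp add: x_def field_simps)
    have Cfr: "Cf E \<rho> r = 1 / (1 - x)"
      using omx a_eq a_pos ar_pos ar by (simp add: Cf_def)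
    define Tn where "Tn n = (\<Sum>u\<in>desc E r. n u)" for n :: "nat \<Rightarrow> nat"
    have key: "wt E \<rho> V (n(r:=k)) = x^k * real ((k + Tn n) choose k) * ((1 - x)^(Tn n) * wt E \<rho> V' n)" for n k
      using wt_factor[OF T rho0 load psubset.hyps(1) psubset.prems(2) r, of n k]
      by (simp add: x_def a_def Tn_def V'_def)
    have nnV: "wt E \<rho> V n \<ge> 0" for n by (rule wt_nonneg[OF T rho0 load psubset.prems(1)])
    have nnV': "wt E \<rho> V' n \<ge> 0" for n by (rule wt_nonneg[OF T rho0 load V'sub])
    have omx_pos: "1 - x > 0" using x1 by simp
    have each1: "((\<lambda>k. wt E \<rho> V (n(r:=k))) has_sum (Cf E \<rho> r * wt E \<rho> V' n)) UNIV" for n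
    proof -
      have "(\<lambda>k. x^k * real ((k + Tn n) choose k) * ((1 - x)^(Tn n) * wt E \<rho> V' n)) sums
             (1 / (1 - x) ^ (Tn n + 1) * ((1 - x)^(Tn n) * wt E \<rho> V' n))"
        by (rule sums_mult2[OF negbin_sums[OF x0 x1]])
      moreover have "1 / (1 - x) ^ (Tn n + 1) * ((1 - x)^(Tn n) * wt E \<rho> V' n) = Cf E \<rho> r * wt E \<rho> V' n"
        using omx_pos by (simp add: Cfr field_simps)
      ultimately have "(\<lambda>k. wt E \<rho> V (n(r:=k))) sums (Cf E \<rho> r * wt E \<rho> V' n)"
        by (simp add: key)
      thus ?thesis by (rule nonneg_sums_has_sum[OF nnV])
    qed
    have eqV: "insert r V' = V" using VV(1) by simp
    have "(wt E \<rho> V has_sum (Cf E \<rho> r * C')) (stV (insert r V'))"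
      by (rule has_sum_split_coord[OF VV(2) nnV each1 has_sum_cmult_right]) (use IH in \<open>simp add: C'_def\<close>)
    hence S1: "(wt E \<rho> V has_sum (\<Prod>v\<in>V. Cf E \<rho> v)) (stV V)"
      by (simp only: eqV CV)
    have S2: "((\<lambda>n. real (n v) * wt E \<rho> V n) has_sum ((\<Prod>v\<in>V. Cf E \<rho> v) * mu E \<rho> v)) (stV V)"
      if v: "v \<in> V" for v
    proof (cases "v = r")
      case True
      define K where "K = x / (1 - x)^2"
      have eachr: "((\<lambda>k. real ((n(r:=k)) r) * wt E \<rho> V (n(r:=k))) has_sum
                   (K * (wt E \<rho> V' n + (\<Sum>u\<in>desc E r. real (n u) * wt E \<rho> V' n)))) UNIV" for n
      proof -
        have "(\<lambda>k. real k * (x^k * real ((k + Tn n) choose k)) * ((1 - x)^(Tn n) * wt E \<rho> V' n)) sums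
               (x * real (Tn n + 1) / (1 - x) ^ (Tn n + 2) * ((1 - x)^(Tn n) * wt E \<rho> V' n))"
          by (rule sums_mult2[OF negbin_mean_sums[OF x0 x1]])
        moreover have "x * real (Tn n + 1) / (1 - x) ^ (Tn n + 2) * ((1 - x)^(Tn n) * wt E \<rho> V' n)
             = K * (wt E \<rho> V' n + (\<Sum>u\<in>desc E r. real (n u) * wt E \<rho> V' n))"
        proof -
          have "real (Tn n + 1) * wt E \<rho> V' n = wt E \<rho> V' n + (\<Sum>u\<in>desc E r. real (n u)) * wt E \<rho> V' n"
            by (simp add: Tn_def algebra_simps)
          also have "(\<Sum>u\<in>desc E r. real (n u)) * wt E \<rho> V' n = (\<Sum>u\<in>desc E r. real (n u) * wt E \<rho> V' n)"
            by (rule sum_distrib_right)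
          finally have "real (Tn n + 1) * wt E \<rho> V' n = wt E \<rho> V' n + (\<Sum>u\<in>desc E r. real (n u) * wt E \<rho> V' n)" .
          moreover have "x * real (Tn n + 1) / (1 - x) ^ (Tn n + 2) * ((1 - x)^(Tn n) * wt E \<rho> V' n)
              = K * (real (Tn n + 1) * wt E \<rho> V' n)"
          proof -
            have p: "(1 - x) ^ (Tn n + 2) = (1 - x)^(Tn n) * (1 - x)^2" by (rule power_add)
            have q: "(1 - x)^(Tn n) > 0" "(1 - x)^2 > 0" using omx_pos by simp_all
            have gen: "\<And>X t Q D w :: real. Q > 0 \<Longrightarrow> D > 0 \<Longrightarrow> X * t / (Q * D) * (Q * w) = X / D * (t * w)"
              by (simp add: field_simps)
            show ?thesis unfolding p K_def by (rule gen[OF q])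
          qed
          ultimately show ?thesis by simp
        qed
        ultimately have "(\<lambda>k. real ((n(r:=k)) r) * wt E \<rho> V (n(r:=k))) sums
                   (K * (wt E \<rho> V' n + (\<Sum>u\<in>desc E r. real (n u) * wt E \<rho> V' n)))"
          by (simp add: key mult_ac)
        thus ?thesis by (rule nonneg_sums_has_sum[rotated]) (simp add: nnV)
      qed
      have g: "((\<lambda>n. K * (wt E \<rho> V' n + (\<Sum>u\<in>desc E r. real (n u) * wt E \<rho> V' n))) has_sum
                (K * (C' + (\<Sum>u\<in>desc E r. C' * mu E \<rho> u)))) (stV V')"
      proof (rule has_sum_cmult_right, rule has_sum_add)
        show "(wt E \<rho> V' has_sum C') (stV V')" using IH by (simp add: C'_def)
        show "((\<lambda>n. \<Sum>u\<in>desc E r. real (n u) * wt E \<rho> V' n) has_sum (\<Sum>u\<in>desc E r. C' * mu E \<rho> u)) (stV V')"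
          by (rule has_sum_finsum[OF fin_desc[OF T]]) (use IH descr in \<open>auto simp: C'_def\<close>)
      qed
      have val: "K * (C' + (\<Sum>u\<in>desc E r. C' * mu E \<rho> u)) = (\<Prod>v\<in>V. Cf E \<rho> v) * mu E \<rho> r"
      proof -
        have mr: "mu E \<rho> r * (1 - Rs E \<rho> r) = \<rho> r * (1 + (\<Sum>u\<in>desc E r. mu E \<rho> u))"
          by (rule mu_rec[OF T load rm])
        have xx: "x / (1 - x) = \<rho> r / (1 - Rs E \<rho> r)"
          using omx a_pos ar_pos by (simp add: x_def field_simps)
        have "mu E \<rho> r = x / (1 - x) * (1 + (\<Sum>u\<in>desc E r. mu E \<rho> u))"
          using mr ar_pos ar unfolding xx by (simp add: field_simps)
        moreover have "K = Cf E \<rho> r * (x / (1 - x))"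
          using omx_pos by (simp add: K_def Cfr power2_eq_square)
        ultimately show ?thesis unfolding CV by (simp add: sum_distrib_left[symmetric] algebra_simps)
      qed
      have "((\<lambda>n. real (n r) * wt E \<rho> V n) has_sum (K * (C' + (\<Sum>u\<in>desc E r. C' * mu E \<rho> u)))) (stV (insert r V'))"
        by (rule has_sum_split_coord[OF VV(2) _ eachr g]) (simp add: nnV)
      thus ?thesis unfolding True val eqV .
    next
      case False
      hence vV': "v \<in> V'" using v by (simp add: V'_def)
      have eachv: "((\<lambda>k. real ((n(r:=k)) v) * wt E \<rho> V (n(r:=k))) has_sum
                   (Cf E \<rho> r * (real (n v) * wt E \<rho> V' n))) UNIV" for n
        using has_sum_cmult_right[OF each1[of n], of "real (n v)"] False by (simp add: mult_ac)
      have g: "((\<lambda>n. Cf E \<rho> r * (real (n v) * wt E \<rho> V' n)) has_sum (Cf E \<rho> r * (C' * mu E \<rho> v))) (stV V')"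
        by (rule has_sum_cmult_right) (use IH vV' in \<open>simp add: C'_def\<close>)
      have "((\<lambda>n. real (n v) * wt E \<rho> V n) has_sum (Cf E \<rho> r * (C' * mu E \<rho> v))) (stV (insert r V'))"
        by (rule has_sum_split_coord[OF VV(2) _ eachv g]) (simp add: nnV)
      moreover have "Cf E \<rho> r * (C' * mu E \<rho> v) = (\<Prod>v\<in>V. Cf E \<rho> v) * mu E \<rho> v"
        unfolding CV by (simp add: mult_ac)
      ultimately show ?thesis unfolding eqV by simp
    qed
    show ?thesis using S1 S2 by blast
  qed
qed


lemma pf_alloc_nonneg: "pf_alloc E v n \<ge> 0"
  unfolding pf_alloc_def by (auto intro!: prod_nonneg divide_nonneg_nonneg sum_nonneg mult_nonneg_nonneg)

lemma pf_alloc_pos: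
  assumes T: "is_rooted_tree m E" and nv: "1 \<le> n v"
  shows "pf_alloc E v n > 0"
proof -
  have nvp: "real (n v) > 0" using nv by auto
  have A: "(\<Sum>u\<in>descb E v. real (n u)) > 0"
    by (rule sum_pos2[of _ v]) (use fin_descb[OF T] nvp in \<open>auto simp: descb_def\<close>)
  have B: "(\<Sum>u\<in>desc E a. real (n u)) / (\<Sum>u\<in>descb E a. real (n u)) > 0" if a: "a \<in> anc E v" for a
  proof -
    have va: "v \<in> desc E a" using a by (simp add: anc_def desc_def)
    have "(\<Sum>u\<in>desc E a. real (n u)) > 0"
      by (rule sum_pos2[of _ v]) (use fin_desc[OF T] nvp va in auto)
    moreover have "(\<Sum>u\<in>descb E a. real (n u)) > 0"
      by (rule sum_pos2[of _ v]) (use fin_descb[OF T] nvp va in \<open>auto simp: descb_def\<close>)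
    ultimately show ?thesis by simp
  qed
  have "(\<Prod>a\<in>anc E v. (\<Sum>u\<in>desc E a. real (n u)) / (\<Sum>u\<in>descb E a. real (n u))) > 0"
    by (rule prod_pos) (use B in auto)
  thus ?thesis using nv A nvp by (simp add: pf_alloc_def)
qed

lemma rate_term_nonneg:
  assumes lam: "\<forall>v\<in>{1..m}. lam v > 0" and r: "\<forall>v\<in>{1..m}. r v > 0" and w: "w \<in> {1..m}"
  shows "0 \<le> (if n' = n(w := Suc (n w)) then lam w else 0)
    + (if 1 \<le> n w \<and> n' = n(w := n w - 1) then r w * pf_alloc E w n else 0)"
proof -
  have "lam w > 0" "r w > 0" using lam r w by auto
  thus ?thesis using pf_alloc_nonneg[of E w n] by auto
qed

lemma rate_pos_up:
  assumes T: "is_rooted_tree m E" and lam: "\<forall>v\<in>{1..m}. lam v > 0" and r: "\<forall>v\<in>{1..m}. r v > 0"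
    and v: "v \<in> {1..m}"
  shows "rate m E lam r n (n(v := Suc (n v))) > 0"
  unfolding rate_def
proof (rule sum_pos2[of _ v])
  show "0 < (if n(v := Suc (n v)) = n(v := Suc (n v)) then lam v else 0)
    + (if 1 \<le> n v \<and> n(v := Suc (n v)) = n(v := n v - 1) then r v * pf_alloc E v n else 0)"
    using lam v by (auto simp: fun_eq_iff)
qed (use rate_term_nonneg[OF lam r] v in auto)

lemma rate_pos_down:
  assumes T: "is_rooted_tree m E" and lam: "\<forall>v\<in>{1..m}. lam v > 0" and r: "\<forall>v\<in>{1..m}. r v > 0"
    and v: "v \<in> {1..m}" and nv: "1 \<le> n v"
  shows "rate m E lam r n (n(v := n v - 1)) > 0"
  unfolding rate_def
proof (rule sum_pos2[of _ v])
  have "r v * pf_alloc E v n > 0" using r v pf_alloc_pos[OF T, of n v] nv by simp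
  moreover have "n(v := n v - 1) \<noteq> n(v := Suc (n v))" by (auto simp: fun_eq_iff)
  ultimately show "0 < (if n(v := n v - 1) = n(v := Suc (n v)) then lam v else 0)
    + (if 1 \<le> n v \<and> n(v := n v - 1) = n(v := n v - 1) then r v * pf_alloc E v n else 0)"
    using nv by simp
qed (use rate_term_nonneg[OF lam r] v in auto)

lemma upd_up_eq: "n(v := Suc (n v)) = n(w := Suc (n w)) \<longleftrightarrow> w = v"
  by (auto simp: fun_eq_iff)

lemma upd_up_down_neq: "1 \<le> n w \<Longrightarrow> n(v := Suc (n v)) \<noteq> n(w := n w - 1)"
  by (auto simp: fun_eq_iff)

lemma rate_up_val:
  assumes v: "v \<in> {1..m}"
  shows "rate m E lam r n (n(v := Suc (n v))) = lam v"
proof -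
  have "rate m E lam r n (n(v := Suc (n v))) = (\<Sum>w\<in>{1..m}. if w = v then lam v else 0)"
    unfolding rate_def
  proof (rule sum.cong[OF refl])
    fix w assume "w \<in> {1..m}"
    have c2: "(1 \<le> n w \<and> n(v := Suc (n v)) = n(w := n w - 1)) = False" using upd_up_down_neq[of n w v] by blast
    have c1: "(n(v := Suc (n v)) = n(w := Suc (n w))) = (w = v)" by (rule upd_up_eq)
    show "(if n(v := Suc (n v)) = n(w := Suc (n w)) then lam w else 0) +
        (if 1 \<le> n w \<and> n(v := Suc (n v)) = n(w := n w - 1) then r w * pf_alloc E w n else 0)
        = (if w = v then lam v else 0)"
      unfolding c1 c2 by auto
  qed
  thus ?thesis using v by simp
qed

lemma rate_down_val:
  assumes v: "v \<in> {1..m}"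
  shows "rate m E lam r (n(v := Suc (n v))) n = r v * pf_alloc E v (n(v := Suc (n v)))"
proof -
  let ?n1 = "n(v := Suc (n v))"
  have t1: "(n = ?n1(w := Suc (?n1 w))) = False" for w
    by (auto simp: fun_eq_iff)
  have t2: "(1 \<le> ?n1 w \<and> n = ?n1(w := ?n1 w - 1)) \<longleftrightarrow> w = v" for w
    by (auto simp: fun_eq_iff)
  have "rate m E lam r ?n1 n = (\<Sum>w\<in>{1..m}. if w = v then r v * pf_alloc E v ?n1 else 0)"
    unfolding rate_def
    by (rule sum.cong[OF refl]) (unfold t1 t2, auto)
  thus ?thesis using v by simp
qed

lemma rate_zero:
  assumes "\<not> (\<exists>v\<in>{1..m}. n' = n(v := Suc (n v)))" "\<not> (\<exists>v\<in>{1..m}. n = n'(v := Suc (n' v)))"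
  shows "rate m E lam r n n' = 0"
  unfolding rate_def
proof (rule sum.neutral, rule ballI)
  fix w assume w: "w \<in> {1..m}"
  have "\<not> (1 \<le> n w \<and> n' = n(w := n w - 1))"
  proof
    assume h: "1 \<le> n w \<and> n' = n(w := n w - 1)"
    hence "n = n'(w := Suc (n' w))" by (auto simp: fun_eq_iff)
    thus False using assms(2) w by blast
  qed
  thus "(if n' = n(w := Suc (n w)) then lam w else 0) + (if 1 \<le> n w \<and> n' = n(w := n w - 1) then r w * pf_alloc E w n else 0) = 0"
    using assms(1) w by auto
qed


lemma sum_upd_Suc:
  assumes "finite A"
  shows "(\<Sum>u\<in>A. (n(v := Suc (n v))) u) = (\<Sum>u\<in>A. n u) + (if v \<in> A then 1 else 0)"
proof -
  have "(\<Sum>u\<in>A. (n(v := Suc (n v))) u) = (\<Sum>u\<in>A. n u + (if u = v then 1 else 0))"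
    by (rule sum.cong) auto
  also have "\<dots> = (\<Sum>u\<in>A. n u) + (if v \<in> A then 1 else 0)"
    using assms by (simp add: sum.distrib)
  finally show ?thesis .
qed

lemma db_up:
  fixes lam r :: "nat \<Rightarrow> real"
  assumes T: "is_rooted_tree m E" and rpos: "\<forall>v\<in>{1..m}. r v > 0"
    and v: "v \<in> {1..m}"
  defines "\<rho> \<equiv> (\<lambda>v. lam v / r v)"
  defines "P \<equiv> (\<lambda>n. \<Prod>u\<in>{1..m}. \<rho> u ^ n u * real (Ss E n u choose n u))"
  shows "P n * lam v = P (n(v := Suc (n v))) * (r v * pf_alloc E v (n(v := Suc (n v))))"
proof -
  let ?n1 = "n(v := Suc (n v))"
  define c where "c u = (if u = v then real (?n1 v) / real (Ss E ?n1 v)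
      else if u \<in> anc E v then (real (Ss E ?n1 u) - real (?n1 u)) / real (Ss E ?n1 u) else 1)" for u
  define f where "f n u = \<rho> u ^ n u * real (Ss E n u choose n u)" for n u
  have nva: "v \<notin> anc E v" by (rule not_anc_self[OF T])
  have Ssum: "(\<Sum>u\<in>descb E a. real (?n1 u)) = real (Ss E ?n1 a)" for a
    by (simp add: Ss_def)
  have Dsum: "(\<Sum>u\<in>desc E a. real (?n1 u)) = real (Ss E ?n1 a) - real (?n1 a)" for a
  proof -
    have "a \<notin> desc E a" by (rule not_desc_self[OF T])
    hence "real (Ss E ?n1 a) = real (?n1 a) + (\<Sum>u\<in>desc E a. real (?n1 u))"
      using fin_desc[OF T, of a] by (simp add: Ss_def descb_def)
    thus ?thesis by simp
  qed
  have pf: "pf_alloc E v ?n1 = (\<Prod>u\<in>{1..m}. c u)"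
  proof -
    have ancbsub: "ancb E v \<subseteq> {1..m}" using anc_sub[OF T, of v] v by (auto simp: ancb_def)
    have "(\<Prod>u\<in>{1..m}. c u) = (\<Prod>u\<in>ancb E v. c u)"
      by (rule prod.mono_neutral_right) (use ancbsub in \<open>auto simp: c_def ancb_def\<close>)
    also have "\<dots> = c v * (\<Prod>u\<in>anc E v. c u)"
      unfolding ancb_def using fin_anc[OF T, of v] nva by simp
    also have "(\<Prod>u\<in>anc E v. c u) = (\<Prod>a\<in>anc E v. (\<Sum>u\<in>desc E a. real (?n1 u)) / (\<Sum>u\<in>descb E a. real (?n1 u)))"
    proof (rule prod.cong[OF refl])
      fix a assume a: "a \<in> anc E v"
      hence av: "a \<noteq> v" using nva by blast
      have "c a = (real (Ss E ?n1 a) - real (?n1 a)) / real (Ss E ?n1 a)"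
        unfolding c_def using a av by (simp only: if_False if_True simp_thms)
      thus "c a = (\<Sum>u\<in>desc E a. real (?n1 u)) / (\<Sum>u\<in>descb E a. real (?n1 u))"
        unfolding Dsum Ssum .
    qed
    finally have e1: "(\<Prod>u\<in>{1..m}. c u) = c v * (\<Prod>a\<in>anc E v. (\<Sum>u\<in>desc E a. real (?n1 u)) / (\<Sum>u\<in>descb E a. real (?n1 u)))" .
    have "pf_alloc E v ?n1 = real (?n1 v) / (\<Sum>u\<in>descb E v. real (?n1 u)) * (\<Prod>a\<in>anc E v. (\<Sum>u\<in>desc E a. real (?n1 u)) / (\<Sum>u\<in>descb E a. real (?n1 u)))"
      unfolding pf_alloc_def by (rule if_P) simp
    also have "real (?n1 v) / (\<Sum>u\<in>descb E v. real (?n1 u)) = c v"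
      unfolding c_def Ssum by (simp only: if_True simp_thms)
    finally have F: "pf_alloc E v ?n1 = c v * (\<Prod>a\<in>anc E v. (\<Sum>u\<in>desc E a. real (?n1 u)) / (\<Sum>u\<in>descb E a. real (?n1 u)))" .
    show ?thesis unfolding F e1 by (rule refl)
  qed
  have fac: "f ?n1 u * c u = f n u * (if u = v then \<rho> v else 1)" if u: "u \<in> {1..m}" for u
  proof (cases "u = v")
    case True
    define S where "S = Ss E n v"
    have S1: "Ss E ?n1 v = Suc S"
      unfolding Ss_def S_def using sum_upd_Suc[OF fin_descb[OF T], of n v v] by (simp add: descb_def)
    have bin: "real (Suc S) * real (S choose n v) = real (Suc S choose Suc (n v)) * real (Suc (n v))"
      by (metis Suc_times_binomial_eq of_nat_mult)
    have "f ?n1 v * c v = \<rho> v ^ Suc (n v) * (real (Suc S choose Suc (n v)) * real (Suc (n v)) / real (Suc S))"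
      by (simp add: f_def c_def S1)
    also have "\<dots> = \<rho> v ^ Suc (n v) * real (S choose n v)"
      using bin by (simp add: field_simps del: of_nat_Suc binomial_Suc_Suc)
    also have "\<dots> = f n v * \<rho> v" by (simp add: f_def S_def)
    finally show ?thesis using True by simp
  next
    case False
    show ?thesis
    proof (cases "u \<in> anc E v")
      case True
      define S where "S = Ss E n u"
      have vu: "v \<in> descb E u" using True by (simp add: descb_iff_ancb ancb_def)
      have S1: "Ss E ?n1 u = Suc S"
        unfolding Ss_def S_def using sum_upd_Suc[OF fin_descb[OF T], of n v u] vu by simp
      have nu: "?n1 u = n u" using False by simp
      have kS: "n u \<le> S"
        unfolding S_def Ss_def by (rule member_le_sum) (use fin_descb[OF T] in \<open>auto simp: descb_def\<close>)
      have bin: "(Suc S - n u) * (Suc S choose n u) = Suc S * (S choose n u)"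
        using binomial_absorb_comp[of "Suc S" "n u"] by simp
      hence bin': "(real (Suc S) - real (n u)) * real (Suc S choose n u) = real (Suc S) * real (S choose n u)"
        using kS by (metis of_nat_diff of_nat_mult le_SucI)
      have "f ?n1 u * c u = \<rho> u ^ n u * ((real (Suc S) - real (n u)) * real (Suc S choose n u) / real (Suc S))"
        using False True by (simp add: f_def c_def S1 nu)
      also have "\<dots> = \<rho> u ^ n u * real (S choose n u)"
        unfolding bin' by (simp del: of_nat_Suc)
      also have "\<dots> = f n u" by (simp add: f_def S_def)
      finally show ?thesis using False by simp
    next
      case False2: False
      have vu: "v \<notin> descb E u" using False False2 by (simp add: descb_iff_ancb ancb_def)
      have S1: "Ss E ?n1 u = Ss E n u"
        unfolding Ss_def using sum_upd_Suc[OF fin_descb[OF T], of n v u] vu by simp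
      show ?thesis using False False2 by (simp add: f_def c_def S1)
    qed
  qed
  have "P ?n1 * pf_alloc E v ?n1 = (\<Prod>u\<in>{1..m}. f ?n1 u * c u)"
    unfolding pf P_def f_def by (simp add: prod.distrib)
  also have "\<dots> = (\<Prod>u\<in>{1..m}. f n u * (if u = v then \<rho> v else 1))"
    by (rule prod.cong[OF refl]) (rule fac)
  also have "\<dots> = P n * \<rho> v"
    unfolding P_def f_def using v by (simp add: prod.distrib)
  finally have "P ?n1 * pf_alloc E v ?n1 = P n * \<rho> v" .
  moreover have "r v * \<rho> v = lam v"
  proof -
    have "r v > 0" using rpos v by blast
    thus ?thesis by (simp add: \<rho>_def)
  qed
  ultimately show ?thesis by (metis mult.left_commute mult.commute)
qed


lemma db_all:
  fixes lam r :: "nat \<Rightarrow> real"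
  assumes T: "is_rooted_tree m E" and rpos: "\<forall>v\<in>{1..m}. r v > 0"
  defines "\<rho> \<equiv> (\<lambda>v. lam v / r v)"
  defines "P \<equiv> (\<lambda>n. \<Prod>u\<in>{1..m}. \<rho> u ^ n u * real (Ss E n u choose n u))"
  shows "P n * rate m E lam r n n' = P n' * rate m E lam r n' n"
proof (cases "\<exists>v\<in>{1..m}. n' = n(v := Suc (n v))")
  case True
  then obtain v where v: "v \<in> {1..m}" "n' = n(v := Suc (n v))" by blast
  show ?thesis using db_up[OF T rpos v(1), of lam n] v rate_up_val[OF v(1)] rate_down_val[OF v(1)]
    unfolding P_def \<rho>_def by simp
next
  case False
  show ?thesis
  proof (cases "\<exists>v\<in>{1..m}. n = n'(v := Suc (n' v))")
    case True
    then obtain v where v: "v \<in> {1..m}" "n = n'(v := Suc (n' v))" by blast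
    show ?thesis using db_up[OF T rpos v(1), of lam n'] v rate_up_val[OF v(1)] rate_down_val[OF v(1)]
      unfolding P_def \<rho>_def by simp
  next
    case False2: False
    have "rate m E lam r n n' = 0" by (rule rate_zero) (use False False2 in auto)
    moreover have "rate m E lam r n' n = 0" by (rule rate_zero) (use False False2 in auto)
    ultimately show ?thesis by simp
  qed
qed

lemma rate_support:
  assumes "n' \<notin> (\<lambda>w. n(w := Suc (n w))) ` {1..m} \<union> (\<lambda>w. n(w := n w - 1)) ` {1..m}"
  shows "rate m E lam r n n' = 0"
  unfolding rate_def
proof (rule sum.neutral, rule ballI)
  fix w assume w: "w \<in> {1..m}"
  have "n' \<noteq> n(w := Suc (n w))" "n' \<noteq> n(w := n w - 1)" using assms w by auto
  thus "(if n' = n(w := Suc (n w)) then lam w else 0) + (if 1 \<le> n w \<and> n' = n(w := n w - 1) then r w * pf_alloc E w n else 0) = 0"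
    by simp
qed

lemma to_zero:
  assumes T: "is_rooted_tree m E" and lam: "\<forall>v\<in>{1..m}. lam v > 0" and rpos: "\<forall>v\<in>{1..m}. r v > 0"
  defines "R \<equiv> {(x, y). x \<in> states m \<and> y \<in> states m \<and> rate m E lam r x y > 0}"
  shows "n \<in> states m \<Longrightarrow> (n, \<lambda>_. 0) \<in> R\<^sup>* \<and> ((\<lambda>_. 0), n) \<in> R\<^sup>*"
proof (induction "sum n {1..m}" arbitrary: n rule: less_induct)
  case less
  show ?case
  proof (cases "\<forall>v\<in>{1..m}. n v = 0")
    case True
    hence "n = (\<lambda>_. 0)" using less.prems by (auto simp: states_def fun_eq_iff)
    thus ?thesis by simp
  next
    case False
    then obtain v where v: "v \<in> {1..m}" "1 \<le> n v" by auto
    define n' where "n' = n(v := n v - 1)"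
    have n'st: "n' \<in> states m" using less.prems by (auto simp: states_def n'_def)
    have lt: "sum n' {1..m} < sum n {1..m}"
      by (rule sum_strict_mono_ex1) (use v in \<open>auto simp: n'_def\<close>)
    have IH: "(n', \<lambda>_. 0) \<in> R\<^sup>* \<and> ((\<lambda>_. 0), n') \<in> R\<^sup>*" by (rule less.hyps[OF lt n'st])
    have d: "(n, n') \<in> R"
      using rate_pos_down[where n=n, OF T lam rpos v] less.prems n'st by (simp add: R_def n'_def)
    have nn: "n'(v := Suc (n' v)) = n" using v by (auto simp: n'_def fun_eq_iff)
    have u: "(n', n) \<in> R"
      using rate_pos_up[OF T lam rpos v(1), of n'] less.prems n'st nn by (simp add: R_def)
    show ?thesis using IH d u by (meson converse_rtrancl_into_rtrancl rtrancl.rtrancl_into_rtrancl)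
  qed
qed

theorem theorem2:
  fixes m :: nat and E :: "(nat \<times> nat) set" and lam r :: "nat \<Rightarrow> real"
  assumes tree: "is_rooted_tree m E"
    and lam_pos: "\<forall>v\<in>{1..m}. lam v > 0"
    and r_pos: "\<forall>v\<in>{1..m}. r v > 0"
    and load: "\<forall>v\<in>{1..m}. (\<Sum>u\<in>ancb E v. lam u / r u) < 1"
  shows
    "(\<forall>n\<in>states m. \<forall>n'\<in>states m.
        (n, n') \<in> {(x, y). x \<in> states m \<and> y \<in> states m \<and> rate m E lam r x y > 0}\<^sup>*)
   \<and> (\<forall>n\<in>states m. pf_stat m E (\<lambda>v. lam v / r v) n > 0)
   \<and> (pf_stat m E (\<lambda>v. lam v / r v) has_sum 1) (states m)
   \<and> (\<forall>n\<in>states m. \<forall>n'\<in>states m.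
        pf_stat m E (\<lambda>v. lam v / r v) n * rate m E lam r n n'
      = pf_stat m E (\<lambda>v. lam v / r v) n' * rate m E lam r n' n)
   \<and> (\<forall>n\<in>states m.
        ((\<lambda>n'. pf_stat m E (\<lambda>v. lam v / r v) n' * rate m E lam r n' n) has_sum
           (pf_stat m E (\<lambda>v. lam v / r v) n * infsum (rate m E lam r n) (states m - {n})))
        (states m - {n}))
   \<and> (\<forall>v\<in>{1..m}.
        ((\<lambda>n. real (n v) * pf_stat m E (\<lambda>v. lam v / r v) n) has_sum
           (lam v / r v * (\<Sum>u\<in>descb E v.
               (1 - real (nchild E u)) / (1 - (\<Sum>w\<in>ancb E u. lam w / r w))))) (states m))
   \<and> (\<forall>v\<in>{1..m}.
        lam v / (\<Sum>\<^sub>\<infinity>n\<in>states m. real (n v) * pf_stat m E (\<lambda>v. lam v / r v) n)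
      = r v / (\<Sum>u\<in>descb E v.
               (1 - real (nchild E u)) / (1 - (\<Sum>w\<in>ancb E u. lam w / r w))))"
proof -
  define \<rho> where "\<rho> = (\<lambda>v. lam v / r v)"
  let ?R = "{(x, y). x \<in> states m \<and> y \<in> states m \<and> rate m E lam r x y > 0}"
  let ?pi = "pf_stat m E \<rho>"
  have rho0: "\<forall>v\<in>{1..m}. 0 \<le> \<rho> v"
  proof
    fix v assume "v \<in> {1..m}"
    hence "lam v > 0" "r v > 0" using lam_pos r_pos by auto
    thus "0 \<le> \<rho> v" by (simp add: \<rho>_def)
  qed
  have loadR: "\<forall>v\<in>{1..m}. Rs E \<rho> v < 1" using load by (simp add: Rs_def \<rho>_def)
  have Vdown: "\<forall>v\<in>{1..m}. desc E v \<subseteq> {1..m}" using desc_sub[OF tree] by blast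
  have C: "(wt E \<rho> {1..m} has_sum (\<Prod>v\<in>{1..m}. Cf E \<rho> v)) (stV {1..m}) \<and>
    (\<forall>v\<in>{1..m}. ((\<lambda>n. real (n v) * wt E \<rho> {1..m} n) has_sum ((\<Prod>v\<in>{1..m}. Cf E \<rho> v) * mu E \<rho> v)) (stV {1..m}))"
    by (rule core[OF tree rho0 loadR finite_atLeastAtMost subset_refl Vdown])
  have st: "stV {1..m} = states m" by (simp add: stV_def states_def)
  have cn: "cnorm m E \<rho> = (\<Prod>v\<in>{1..m}. Cf E \<rho> v)" by (simp add: cnorm_def Cf_def Rs_def)
  have cpos: "cnorm m E \<rho> > 0"
    unfolding cn
  proof (rule prod_pos)
    fix v assume v: "v \<in> {1..m}"
    have "1 - (\<Sum>u\<in>anc E v. \<rho> u) > 0" using anc_lt1[OF tree rho0 loadR, of v] by simp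
    moreover have "1 - Rs E \<rho> v > 0" using loadR v by simp
    ultimately show "0 < Cf E \<rho> v" by (simp add: Cf_def)
  qed
  define P where "P = (\<lambda>n. \<Prod>u\<in>{1..m}. \<rho> u ^ n u * real (Ss E n u choose n u))"
  have wtP: "wt E \<rho> {1..m} n = P n" for n
  proof -
    have "alph E \<rho> {1..m} v = 1" for v
    proof -
      have e: "anc E v - {1..m} = {}" using anc_sub[OF tree, of v] by blast
      show ?thesis unfolding alph_def e by simp
    qed
    thus ?thesis by (simp add: wt_def P_def)
  qed
  have piP: "?pi n = P n / cnorm m E \<rho>" for n
    by (simp add: pf_stat_def P_def Ss_def)
  have G1: "\<forall>n\<in>states m. \<forall>n'\<in>states m. (n, n') \<in> ?R\<^sup>*"
  proof (intro ballI)
    fix n n' assume n: "n \<in> states m" and n': "n' \<in> states m"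
    have "(n, \<lambda>_. 0) \<in> ?R\<^sup>*" using to_zero[OF tree lam_pos r_pos n] by blast
    moreover have "((\<lambda>_. 0), n') \<in> ?R\<^sup>*" using to_zero[OF tree lam_pos r_pos n'] by blast
    ultimately show "(n, n') \<in> ?R\<^sup>*" by (rule rtrancl_trans)
  qed
  have G2: "\<forall>n\<in>states m. ?pi n > 0"
  proof
    fix n assume n: "n \<in> states m"
    have "P n > 0"
      unfolding P_def
    proof (rule prod_pos)
      fix v assume v: "v \<in> {1..m}"
      have "\<rho> v > 0" using lam_pos r_pos v by (simp add: \<rho>_def)
      moreover have "n v \<le> Ss E n v"
        unfolding Ss_def by (rule member_le_sum) (use fin_descb[OF tree] in \<open>auto simp: descb_def\<close>)
      ultimately show "0 < \<rho> v ^ n v * real (Ss E n v choose n v)" by simp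
    qed
    thus "?pi n > 0" using cpos piP by simp
  qed
  have G3: "(?pi has_sum 1) (states m)"
  proof -
    have "((\<lambda>n. (1 / cnorm m E \<rho>) * wt E \<rho> {1..m} n) has_sum ((1 / cnorm m E \<rho>) * cnorm m E \<rho>)) (states m)"
      by (rule has_sum_cmult_right) (use C st cn in simp)
    moreover have piF: "?pi = (\<lambda>n. wt E \<rho> {1..m} n / cnorm m E \<rho>)" by (rule ext) (simp only: piP wtP)
    ultimately show ?thesis using cpos by simp
  qed
  have DB: "?pi n * rate m E lam r n n' = ?pi n' * rate m E lam r n' n" for n n'
  proof -
    have "P n * rate m E lam r n n' = P n' * rate m E lam r n' n"
      using db_all[OF tree r_pos, of lam n n'] by (simp add: P_def \<rho>_def)
    thus ?thesis by (simp add: piP)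
  qed
  have G4: "\<forall>n\<in>states m. \<forall>n'\<in>states m. ?pi n * rate m E lam r n n' = ?pi n' * rate m E lam r n' n"
    using DB by blast
  have G5: "\<forall>n\<in>states m. ((\<lambda>n'. ?pi n' * rate m E lam r n' n) has_sum
           (?pi n * infsum (rate m E lam r n) (states m - {n}))) (states m - {n})"
  proof
    fix n assume n: "n \<in> states m"
    define F where "F = (\<lambda>w. n(w := Suc (n w))) ` {1..m} \<union> (\<lambda>w. n(w := n w - 1)) ` {1..m}"
    have "(rate m E lam r n has_sum (\<Sum>x\<in>F \<inter> (states m - {n}). rate m E lam r n x)) (states m - {n})"
      by (rule has_sum_finite_neutralI) (auto simp: F_def intro!: rate_support)
    hence "rate m E lam r n summable_on (states m - {n})" by (rule has_sum_imp_summable)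
    hence "((\<lambda>n'. ?pi n * rate m E lam r n n') has_sum (?pi n * infsum (rate m E lam r n) (states m - {n}))) (states m - {n})"
      by (intro has_sum_cmult_right has_sum_infsum)
    thus "((\<lambda>n'. ?pi n' * rate m E lam r n' n) has_sum (?pi n * infsum (rate m E lam r n) (states m - {n}))) (states m - {n})"
      by (simp add: DB)
  qed
  have mu_eq: "mu E \<rho> v = \<rho> v * (\<Sum>u\<in>descb E v. (1 - real (nchild E u)) / (1 - (\<Sum>w\<in>ancb E u. \<rho> w)))" for v
    by (simp add: mu_def fq_def Rs_def)
  have wtF: "wt E \<rho> {1..m} = P" by (rule ext) (rule wtP)
  have C2: "\<forall>v\<in>{1..m}. ((\<lambda>n. real (n v) * P n) has_sum (cnorm m E \<rho> * mu E \<rho> v)) (states m)"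
    using C unfolding wtF st cn by blast
  have M: "((\<lambda>n. real (n v) * ?pi n) has_sum mu E \<rho> v) (states m)" if v: "v \<in> {1..m}" for v
  proof -
    have "((\<lambda>n. (1 / cnorm m E \<rho>) * (real (n v) * P n)) has_sum ((1 / cnorm m E \<rho>) * (cnorm m E \<rho> * mu E \<rho> v))) (states m)"
      by (rule has_sum_cmult_right) (use C2 v in blast)
    moreover have "(\<lambda>n. (1 / cnorm m E \<rho>) * (real (n v) * P n)) = (\<lambda>n. real (n v) * ?pi n)"
      by (rule ext) (simp add: piP)
    moreover have "(1 / cnorm m E \<rho>) * (cnorm m E \<rho> * mu E \<rho> v) = mu E \<rho> v" using cpos by simp
    ultimately show ?thesis by simp
  qed
  have G6: "\<forall>v\<in>{1..m}. ((\<lambda>n. real (n v) * ?pi n) has_sum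
           (\<rho> v * (\<Sum>u\<in>descb E v. (1 - real (nchild E u)) / (1 - (\<Sum>w\<in>ancb E u. \<rho> w))))) (states m)"
    using M mu_eq by simp
  have G7: "\<forall>v\<in>{1..m}. lam v / (\<Sum>\<^sub>\<infinity>n\<in>states m. real (n v) * ?pi n)
      = r v / (\<Sum>u\<in>descb E v. (1 - real (nchild E u)) / (1 - (\<Sum>w\<in>ancb E u. \<rho> w)))"
  proof
    fix v assume v: "v \<in> {1..m}"
    have "(\<Sum>\<^sub>\<infinity>n\<in>states m. real (n v) * ?pi n) = \<rho> v * (\<Sum>u\<in>descb E v. (1 - real (nchild E u)) / (1 - (\<Sum>w\<in>ancb E u. \<rho> w)))"
      using G6 v by (blast intro: infsumI)
    moreover have "lam v > 0" "r v > 0" using lam_pos r_pos v by auto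
    ultimately show "lam v / (\<Sum>\<^sub>\<infinity>n\<in>states m. real (n v) * ?pi n)
      = r v / (\<Sum>u\<in>descb E v. (1 - real (nchild E u)) / (1 - (\<Sum>w\<in>ancb E u. \<rho> w)))"
      by (simp add: \<rho>_def)
  qed
  show ?thesis using G1 G2 G3 G4 G5 G6 G7 unfolding \<rho>_def by blast
qed

end
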